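(* There exists a compact metrizable abelian group $K$ having a countable dense subgroup $G$ which, in the subspace topology, is not $g$-reversible.
   Context: All topological groups are assumed Hausdorff. A topological group $G$ is called $g$-reversible if every continuous automorphism of $G$ (i.e. every continuous group isomorphism of $G$ onto itself) is an open map. *)

theory Defs
  imports "HOL-Analysis.Analysis" "HOL-Algebra.Group"
begin

definition topological_group :: "('a, 'b) monoid_scheme \<Rightarrow> 'a topology \<Rightarrow> bool" where
  "topological_group G T \<longleftrightarrow>
     group G \<and> topspace T = carrier G \<and> Hausdorff_space T \<and>
     continuous_map (prod_topology T T) T (\<lambda>(x, y). x \<otimes>\<^bsub>G\<^esub> y) \<and>
     continuous_map T T (\<lambda>x. inv\<^bsub>G\<^esub> x)"

definition g_reversible :: "('a, 'b) monoid_scheme \<Rightarrow> 'a topology \<Rightarrow> bool" where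
  "g_reversible G T \<longleftrightarrow>
     (\<forall>f. f \<in> iso G G \<and> continuous_map T T f \<longrightarrow> open_map T T f)"

end

theory Submission
  imports Defs "HOL-Library.Countable_Set"
begin

definition C :: "(nat \<Rightarrow> real) set" where "C = PiE UNIV (\<lambda>_. {0,1})"
definition Kg :: "(nat\<Rightarrow>real) monoid" where
  "Kg = \<lparr>carrier = C, mult = (\<lambda>x y. \<lambda>n. \<bar>x n - y n\<bar>), one = (\<lambda>n. 0)\<rparr>"
definition PT :: "(nat \<Rightarrow> real) topology" where "PT = product_topology (\<lambda>_. euclideanreal) UNIV"
definition TT where "TT = subtopology PT C"
definition HH where "HH = {x \<in> C. finite {n. x n \<noteq> 0}}"
definition gm :: "(nat \<Rightarrow> real) \<Rightarrow> (nat \<Rightarrow> real)" where "gm x = (\<lambda>n. \<bar>x n - x (Suc n)\<bar>)"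

lemma C_iff: "x \<in> C \<longleftrightarrow> (\<forall>n. x n = 0 \<or> x n = 1)"
  by (auto simp: C_def PiE_iff)

lemma absC: "x \<in> C \<Longrightarrow> y \<in> C \<Longrightarrow> \<bar>x n - y m\<bar> = (if x n = y m then 0 else 1)"
proof -
  assume "x \<in> C" "y \<in> C"
  then have "x n = 0 \<or> x n = 1" "y m = 0 \<or> y m = 1" by (auto simp: C_iff)
  then show ?thesis by auto
qed

lemma mclosed: "a \<in> C \<Longrightarrow> b \<in> C \<Longrightarrow> (\<lambda>n. \<bar>a n - b n\<bar>) \<in> C"
  by (auto simp: C_iff absC)

lemma group_Kg: "comm_group Kg"
proof (rule comm_groupI)
  show "\<And>x y. x \<in> carrier Kg \<Longrightarrow> y \<in> carrier Kg \<Longrightarrow> x \<otimes>\<^bsub>Kg\<^esub> y \<in> carrier Kg"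
    by (simp add: Kg_def mclosed)
  show "\<one>\<^bsub>Kg\<^esub> \<in> carrier Kg" by (simp add: Kg_def C_iff)
  show "\<And>x y z. x \<in> carrier Kg \<Longrightarrow> y \<in> carrier Kg \<Longrightarrow> z \<in> carrier Kg \<Longrightarrow>
    x \<otimes>\<^bsub>Kg\<^esub> y \<otimes>\<^bsub>Kg\<^esub> z = x \<otimes>\<^bsub>Kg\<^esub> (y \<otimes>\<^bsub>Kg\<^esub> z)"
  proof -
    fix x y z assume "x \<in> carrier Kg" "y \<in> carrier Kg" "z \<in> carrier Kg"
    then have "\<And>n. (x n = 0 \<or> x n = 1) \<and> (y n = 0 \<or> y n = 1) \<and> (z n = 0 \<or> z n = 1)"
      by (simp add: Kg_def C_iff)
    then show "x \<otimes>\<^bsub>Kg\<^esub> y \<otimes>\<^bsub>Kg\<^esub> z = x \<otimes>\<^bsub>Kg\<^esub> (y \<otimes>\<^bsub>Kg\<^esub> z)"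
      unfolding Kg_def fun_eq_iff by (simp, metis abs_0 abs_1 diff_0_right diff_self abs_minus_cancel diff_0)
  qed
  show "\<And>x. x \<in> carrier Kg \<Longrightarrow> \<one>\<^bsub>Kg\<^esub> \<otimes>\<^bsub>Kg\<^esub> x = x"
  proof -
    fix x assume "x \<in> carrier Kg"
    then have "\<And>n. x n = 0 \<or> x n = 1" by (simp add: Kg_def C_iff)
    then show "\<one>\<^bsub>Kg\<^esub> \<otimes>\<^bsub>Kg\<^esub> x = x" unfolding Kg_def fun_eq_iff by (simp, metis abs_0 abs_1 abs_minus_cancel)
  qed
  show "\<And>x y. x \<in> carrier Kg \<Longrightarrow> y \<in> carrier Kg \<Longrightarrow> x \<otimes>\<^bsub>Kg\<^esub> y = y \<otimes>\<^bsub>Kg\<^esub> x"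
    by (auto simp: Kg_def fun_eq_iff abs_minus_commute)
  show "\<And>x. x \<in> carrier Kg \<Longrightarrow> \<exists>y\<in>carrier Kg. y \<otimes>\<^bsub>Kg\<^esub> x = \<one>\<^bsub>Kg\<^esub>"
    by (auto simp: Kg_def intro!: bexI)
qed

lemma inv_Kg: "x \<in> carrier Kg \<Longrightarrow> inv\<^bsub>Kg\<^esub> x = x"
proof -
  assume x: "x \<in> carrier Kg"
  have "x \<otimes>\<^bsub>Kg\<^esub> x = \<one>\<^bsub>Kg\<^esub>" by (simp add: Kg_def)
  then show ?thesis using group_Kg x by (metis comm_group_def group.inv_equality)
qed

lemma carrier_Kg[simp]: "carrier Kg = C" by (simp add: Kg_def)

lemma topspace_TT: "topspace TT = C"
  by (simp add: TT_def PT_def C_def)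

lemma TT_alt: "TT = product_topology (\<lambda>_. top_of_set {0,1}) UNIV"
  by (simp add: TT_def PT_def C_def subtopology_product_topology)

lemma compact_TT: "compact_space TT"
  unfolding TT_def PT_def C_def
  by (rule compact_space_subtopology) (simp add: compactin_PiE compactin_euclidean_iff)

lemma metr_TT: "metrizable_space TT"
  unfolding TT_def PT_def
  by (intro metrizable_space_subtopology) (simp add: metrizable_space_product_topology metrizable_space_euclidean)

lemma haus_TT: "Hausdorff_space TT"
  unfolding TT_def PT_def
  by (intro Hausdorff_space_subtopology) (simp add: Hausdorff_space_product_topology)

lemma cont_comp: "continuous_map (subtopology PT S) euclideanreal (\<lambda>x. x k)"
  unfolding PT_def
  by (intro continuous_map_from_subtopology continuous_map_product_projection UNIV_I)

lemma topgrp: "topological_group Kg TT"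
  unfolding topological_group_def
proof (intro conjI)
  show "group Kg" using group_Kg comm_group_def by blast
  show "topspace TT = carrier Kg" by (simp add: topspace_TT Kg_def)
  show "Hausdorff_space TT" by (rule haus_TT)
  show "continuous_map TT TT (\<lambda>x. inv\<^bsub>Kg\<^esub> x)"
    by (rule continuous_map_eq[OF continuous_map_id]) (simp add: inv_Kg topspace_TT)
  have "continuous_map (prod_topology TT TT) TT (\<lambda>(x,y). \<lambda>n. \<bar>x n - y n\<bar>)"
    unfolding TT_def
  proof (subst continuous_map_in_subtopology, intro conjI)
    show "continuous_map (prod_topology (subtopology PT C) (subtopology PT C)) PT (\<lambda>(x, y) n. \<bar>x n - y n\<bar>)"
      unfolding PT_def continuous_map_componentwise_UNIV
    proof
      fix k
      have a: "continuous_map (prod_topology (subtopology PT C) (subtopology PT C)) euclideanreal (\<lambda>p. fst p k)"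
        using continuous_map_compose[OF continuous_map_fst cont_comp] by (simp add: o_def)
      have b: "continuous_map (prod_topology (subtopology PT C) (subtopology PT C)) euclideanreal (\<lambda>p. snd p k)"
        using continuous_map_compose[OF continuous_map_snd cont_comp] by (simp add: o_def)
      show "continuous_map (prod_topology (subtopology (product_topology (\<lambda>_. euclideanreal) UNIV) C)
               (subtopology (product_topology (\<lambda>_. euclideanreal) UNIV) C)) euclideanreal (\<lambda>x. ((\<lambda>(x, y) n. \<bar>x n - y n\<bar>) x) k)"
        using continuous_map_real_abs[OF continuous_map_diff[OF a b]] by (simp add: case_prod_beta PT_def)
    qed
    show "(\<lambda>(x, y) n. \<bar>x n - y n\<bar>) \<in> topspace (prod_topology (subtopology PT C) (subtopology PT C)) \<rightarrow> C"
      by (auto simp: PT_def mclosed) 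
  qed
  then show "continuous_map (prod_topology TT TT) TT (\<lambda>(x, y). x \<otimes>\<^bsub>Kg\<^esub> y)"
    by (simp add: Kg_def)
qed

lemma fin_bound: "finite {n::nat. x n \<noteq> (0::real)} \<Longrightarrow> \<exists>N. \<forall>n\<ge>N. x n = 0"
proof -
  assume f: "finite {n. x n \<noteq> (0::real)}"
  obtain m where m: "\<forall>n\<in>{n. x n \<noteq> 0}. n \<le> m" using f finite_nat_set_iff_bounded_le by blast
  show ?thesis
  proof (intro exI allI impI)
    fix n assume n: "Suc m \<le> n"
    show "x n = 0"
    proof (rule ccontr)
      assume "x n \<noteq> 0"
      then have "n \<le> m" using m by blast
      then show False using n by simp
    qed
  qed
qed

lemma grp_Kg: "group Kg" using group_Kg comm_group_def by blast

lemma HH_sub: "subgroup HH Kg"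
proof (rule group.subgroupI[OF grp_Kg])
  show "HH \<subseteq> carrier Kg" by (auto simp: HH_def)
  show "HH \<noteq> {}" 
  proof -
    have "(\<lambda>n. 0) \<in> HH" by (simp add: HH_def C_iff)
    then show ?thesis by blast
  qed
next
  fix a assume "a \<in> HH" then show "inv\<^bsub>Kg\<^esub> a \<in> HH" by (simp add: inv_Kg HH_def)
next
  fix a b assume a: "a \<in> HH" and b: "b \<in> HH"
  have "{n. \<bar>a n - b n\<bar> \<noteq> 0} \<subseteq> {n. a n \<noteq> 0} \<union> {n. b n \<noteq> 0}" by auto
  then show "a \<otimes>\<^bsub>Kg\<^esub> b \<in> HH" using a b
    by (auto simp: HH_def Kg_def mclosed intro: finite_subset)
qed

lemma HH_count: "countable HH"
proof -
  have "HH \<subseteq> (\<lambda>S. \<lambda>n. if n \<in> S then 1 else 0) ` Collect finite"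
  proof
    fix x assume x: "x \<in> HH"
    then have "x = (\<lambda>n. if n \<in> {n. x n \<noteq> 0} then 1 else 0)"
      by (auto simp: HH_def C_iff fun_eq_iff)
    then show "x \<in> (\<lambda>S. \<lambda>n. if n \<in> S then 1 else 0) ` Collect finite" using x
      by (intro image_eqI[of _ _ "{n. x n \<noteq> 0}"]) (auto simp: HH_def)
  qed
  then show ?thesis
    using countable_Collect_finite countable_image countable_subset by blast
qed

lemma openin_TT_point:
  assumes "openin TT W" "x \<in> W"
  obtains N where "\<And>h. h \<in> C \<Longrightarrow> (\<And>n. n < N \<Longrightarrow> h n = x n) \<Longrightarrow> h \<in> W"
proof -
  have op: "openin (product_topology (\<lambda>_. top_of_set {0::real,1}) UNIV) W" using assms(1) TT_alt by simp
  obtain U where U0: "finite {i \<in> UNIV. U i \<noteq> topspace (top_of_set {0::real,1})}" and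
    U: "x \<in> PiE UNIV U" "PiE UNIV U \<subseteq> W"
    using op assms(2) unfolding openin_product_topology_alt by blast
  have U1: "finite {i. U i \<noteq> {0,1}}" using U0 by simp
  obtain N where N0: "\<forall>i\<in>{i. U i \<noteq> {0,1}}. i < N"
    using U1 finite_nat_set_iff_bounded by blast
  have N: "\<And>i. U i \<noteq> {0,1} \<Longrightarrow> i < N" using N0 by blast
  show ?thesis
  proof (rule that[of N])
    fix h assume h: "h \<in> C" "\<And>n. n < N \<Longrightarrow> h n = x n"
    have "h \<in> PiE UNIV U"
    proof (auto simp: PiE_iff)
      fix i show "h i \<in> U i"
      proof (cases "i < N")
        case True then show ?thesis using h U(1) by (auto simp: PiE_iff)
      next
        case False then have "U i = {0,1}" using N by blast
        then show ?thesis using h(1) by (auto simp: C_iff)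
      qed
    qed
    then show "h \<in> W" using U(2) by blast
  qed
qed

lemma HH_dense: "TT closure_of HH = topspace TT"
proof -
  have "x \<in> TT closure_of HH" if x: "x \<in> C" for x
  proof (subst in_closure_of, intro conjI allI impI)
    show "x \<in> topspace TT" using x by (simp add: topspace_TT)
    fix W assume "x \<in> W \<and> openin TT W"
    then obtain N where N: "\<And>h. h \<in> C \<Longrightarrow> (\<And>n. n < N \<Longrightarrow> h n = x n) \<Longrightarrow> h \<in> W"
      using openin_TT_point by metis
    define h where "h = (\<lambda>n. if n < N then x n else 0)"
    have hC: "h \<in> C" using x by (auto simp: h_def C_iff)
    have "{n. h n \<noteq> 0} \<subseteq> {..<N}" by (auto simp: h_def split: if_splits)
    then have "h \<in> HH" using hC by (auto simp: HH_def intro: finite_subset)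
    moreover have "h \<in> W" using N[OF hC] by (simp add: h_def)
    ultimately show "\<exists>y. y \<in> HH \<and> y \<in> W" by blast
  qed
  moreover have "TT closure_of HH \<subseteq> topspace TT" by (rule closure_of_subset_topspace)
  ultimately show ?thesis by (auto simp: topspace_TT)
qed

lemma gmn: "x \<in> C \<Longrightarrow> gm x n = (if x n = x (Suc n) then 0 else 1)"
  unfolding gm_def using absC[of x x n "Suc n"] by simp

lemma gm_C: "x \<in> C \<Longrightarrow> gm x \<in> C"
  by (simp add: C_iff gmn)

lemma gm_HH: "x \<in> HH \<Longrightarrow> gm x \<in> HH"
proof -
  assume x: "x \<in> HH"
  have "{n. gm x n \<noteq> 0} \<subseteq> {n. x n \<noteq> 0} \<union> (\<lambda>n. n - 1) ` {n. x n \<noteq> 0}"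
  proof
    fix n assume "n \<in> {n. gm x n \<noteq> 0}"
    then have "x n \<noteq> 0 \<or> x (Suc n) \<noteq> 0" by (auto simp: gm_def)
    then show "n \<in> {n. x n \<noteq> 0} \<union> (\<lambda>n. n - 1) ` {n. x n \<noteq> 0}"
      by (auto intro: image_eqI[of _ _ "Suc n"])
  qed
  then show ?thesis using x by (auto simp: HH_def gm_C intro: finite_subset)
qed

lemma gm_cont: "continuous_map TT TT gm"
  unfolding TT_def
proof (subst continuous_map_in_subtopology, intro conjI)
  show "continuous_map (subtopology PT C) PT gm"
    unfolding PT_def continuous_map_componentwise_UNIV gm_def
    using continuous_map_real_abs[OF continuous_map_diff[OF cont_comp cont_comp]]
    by (simp add: PT_def)
  show "gm \<in> topspace (subtopology PT C) \<rightarrow> C"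
    by (auto simp: PT_def C_def[symmetric] gm_C)
qed

lemma gm_cont_HH: "continuous_map (subtopology TT HH) (subtopology TT HH) gm"
  by (subst continuous_map_in_subtopology)
     (auto intro: continuous_map_from_subtopology gm_cont simp: gm_HH)

lemma gm_hom: "x \<in> C \<Longrightarrow> y \<in> C \<Longrightarrow> gm (\<lambda>n. \<bar>x n - y n\<bar>) = (\<lambda>n. \<bar>gm x n - gm y n\<bar>)"
proof -
  assume x: "x \<in> C" and y: "y \<in> C"
  show ?thesis
  proof
    fix n
    have "x n = 0 \<or> x n = 1" "y n = 0 \<or> y n = 1" "x (Suc n) = 0 \<or> x (Suc n) = 1" "y (Suc n) = 0 \<or> y (Suc n) = 1"
      using x y by (auto simp: C_iff)
    then show "gm (\<lambda>n. \<bar>x n - y n\<bar>) n = \<bar>gm x n - gm y n\<bar>"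
      by (auto simp: gm_def)
  qed
qed

lemma gm_inj: "inj_on gm HH"
proof
  fix x y assume x: "x \<in> HH" and y: "y \<in> HH" and e: "gm x = gm y"
  have xC: "x \<in> C" and yC: "y \<in> C" using x y by (auto simp: HH_def)
  have step: "(x n = y n) = (x (Suc n) = y (Suc n))" for n
  proof -
    have "gm x n = gm y n" using e by simp
    moreover have "x n = 0 \<or> x n = 1" "y n = 0 \<or> y n = 1" "x (Suc n) = 0 \<or> x (Suc n) = 1" "y (Suc n) = 0 \<or> y (Suc n) = 1"
      using xC yC by (auto simp: C_iff)
    ultimately show ?thesis by (auto simp: gm_def)
  qed
  have all: "(x n = y n) = (x 0 = y 0)" for n
    by (induction n) (use step in auto)
  obtain N1 where N1: "\<forall>n\<ge>N1. x n = 0" using x fin_bound by (auto simp: HH_def)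
  obtain N2 where N2: "\<forall>n\<ge>N2. y n = 0" using y fin_bound by (auto simp: HH_def)
  have "x (max N1 N2) = y (max N1 N2)" using N1 N2 by simp
  then have "x 0 = y 0" using all by blast
  then show "x = y" using all by blast
qed

lemma gm_surj: "gm ` HH = HH"
proof
  show "gm ` HH \<subseteq> HH" using gm_HH by blast
  show "HH \<subseteq> gm ` HH"
  proof
    fix y assume y: "y \<in> HH"
    have fin: "finite {j. n \<le> j \<and> y j \<noteq> 0}" for n
      using y by (auto simp: HH_def intro: finite_subset)
    define x where "x n = (if even (card {j. n \<le> j \<and> y j \<noteq> 0}) then 0 else (1::real))" for n
    have xC: "x \<in> C" by (auto simp: C_iff x_def)
    obtain N where N: "\<forall>n\<ge>N. y n = 0" using y fin_bound by (auto simp: HH_def)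
    have "{n. x n \<noteq> 0} \<subseteq> {..<N}"
    proof
      fix n assume "n \<in> {n. x n \<noteq> 0}"
      then have xn: "x n \<noteq> 0" by simp
      have "{j. n \<le> j \<and> y j \<noteq> 0} \<noteq> {}"
      proof
        assume "{j. n \<le> j \<and> y j \<noteq> 0} = {}"
        then have c: "card {j. n \<le> j \<and> y j \<noteq> 0} = 0" by (simp only: card.empty)
        have "x n = 0" unfolding x_def c by simp
        then show False using xn by simp
      qed
      then obtain j where j: "n \<le> j" "y j \<noteq> 0" by auto
      then have "j < N" using N not_le by blast
      then show "n \<in> {..<N}" using j by simp
    qed
    then have xH: "x \<in> HH" using xC by (auto simp: HH_def intro: finite_subset)
    have "gm x = y"
    proof
      fix n
      have seteq: "{j. n \<le> j \<and> y j \<noteq> 0} = (if y n \<noteq> 0 then insert n else id) {j. Suc n \<le> j \<and> y j \<noteq> 0}"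
        by (auto simp: le_Suc_eq Suc_le_eq order.order_iff_strict)
      have yn: "y n = 0 \<or> y n = 1" using y by (auto simp: HH_def C_iff)
      show "gm x n = y n"
      proof (cases "y n = 0")
        case True
        then show ?thesis using seteq by (simp add: gmn[OF xC] x_def)
      next
        case False
        then have "card {j. n \<le> j \<and> y j \<noteq> 0} = Suc (card {j. Suc n \<le> j \<and> y j \<noteq> 0})"
          using seteq fin[of "Suc n"] by simp
        then show ?thesis using False yn by (simp add: gmn[OF xC] x_def)
      qed
    qed
    then show "y \<in> gm ` HH" using xH by blast
  qed
qed



definition GG where "GG = Kg\<lparr>carrier := HH\<rparr>"

lemma gm_iso: "gm \<in> iso GG GG"
proof -
  have "gm \<in> hom GG GG"
  proof (rule homI)
    fix x assume "x \<in> carrier GG" then show "gm x \<in> carrier GG" by (simp add: GG_def gm_HH)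
  next
    fix x y assume "x \<in> carrier GG" "y \<in> carrier GG"
    then have "x \<in> C" "y \<in> C" by (auto simp: GG_def HH_def)
    then show "gm (x \<otimes>\<^bsub>GG\<^esub> y) = gm x \<otimes>\<^bsub>GG\<^esub> gm y" by (simp add: GG_def Kg_def gm_hom)
  qed
  moreover have "bij_betw gm HH HH" using gm_inj gm_surj by (simp add: bij_betw_def)
  ultimately show ?thesis by (simp add: iso_def GG_def)
qed

lemma U_open: "openin (subtopology TT HH) {x \<in> HH. x 0 = 0}"
proof -
  have o0: "openin (top_of_set {0::real,1}) {0}"
  proof (subst openin_subtopology, intro exI conjI)
    show "openin euclideanreal {..<1/2}" by simp
    show "{0::real} = {..<1/2} \<inter> {0,1}" by auto
  qed
  have pc: "continuous_map (product_topology (\<lambda>_. top_of_set {0::real,1}) UNIV) (top_of_set {0,1}) (\<lambda>x. x 0)"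
    using continuous_map_product_projection[of 0 UNIV "\<lambda>_. top_of_set {0::real,1}"] by simp
  have "openin TT {x \<in> topspace TT. x 0 \<in> {0}}"
    unfolding TT_alt by (rule openin_continuous_map_preimage[OF pc o0])
  then have "openin (subtopology TT HH) (HH \<inter> {x \<in> topspace TT. x 0 \<in> {0}})"
    by (auto simp: openin_subtopology)
  moreover have "HH \<inter> {x \<in> topspace TT. x 0 \<in> {0}} = {x \<in> HH. x 0 = 0}"
    by (auto simp: topspace_TT HH_def)
  ultimately show ?thesis by simp
qed

lemma not_in_image:
  assumes x: "x \<in> HH" "x 0 = 0" and e: "gm x = (\<lambda>n. if n = N then 1 else 0)"
  shows False
proof -
  have xC: "x \<in> C" using x by (simp add: HH_def)
  have eq: "x n = x (Suc n)" if nN: "n \<noteq> N" for n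
  proof -
    have "gm x n = 0" using e nN by simp
    then show ?thesis by (simp add: gmn[OF xC] split: if_splits)
  qed
  have "gm x N = 1" using e by simp
  then have neq: "x N \<noteq> x (Suc N)" by (simp add: gmn[OF xC] split: if_splits)
  have a: "n \<le> N \<Longrightarrow> x n = 0" for n
  proof (induction n)
    case 0 show ?case using x(2) by simp
  next
    case (Suc n)
    then have "n \<noteq> N" "n \<le> N" by auto
    then have "x n = 0" "x n = x (Suc n)" using Suc.IH eq by auto
    then show ?case by simp
  qed
  have xN: "x N = 0" using a by simp
  have "x (Suc N) = 0 \<or> x (Suc N) = 1" using xC C_iff by blast
  then have s1: "x (Suc N) = 1" using neq xN by auto
  have b: "x (Suc N + k) = 1" for k
  proof (induction k)
    case 0 show ?case using s1 by simp
  next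
    case (Suc k)
    have "Suc N + k \<noteq> N" by simp
    then have "x (Suc N + k) = x (Suc (Suc N + k))" by (rule eq)
    then show ?case using Suc.IH by simp
  qed
  obtain M where "\<forall>n\<ge>M. x n = 0" using x fin_bound by (auto simp: HH_def)
  then have "x (Suc N + M) = 0" by simp
  with b show False by simp
qed

lemma not_open: "\<not> open_map (subtopology TT HH) (subtopology TT HH) gm"
proof
  assume om: "open_map (subtopology TT HH) (subtopology TT HH) gm"
  have "openin (subtopology TT HH) (gm ` {x \<in> HH. x 0 = 0})"
    using om U_open by (simp add: open_map_def)
  then obtain W where W: "openin TT W" "gm ` {x \<in> HH. x 0 = 0} = W \<inter> HH"
    by (auto simp: openin_subtopology)
  have z: "(\<lambda>n. 0::real) \<in> HH" by (simp add: HH_def C_iff)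
  have "gm (\<lambda>n. 0) = (\<lambda>n. 0)" by (simp add: gm_def)
  then have "(\<lambda>n. 0::real) \<in> gm ` {x \<in> HH. x 0 = 0}" using z by force
  then have "(\<lambda>n. 0::real) \<in> W" using W by blast
  then obtain N where N: "\<And>h. h \<in> C \<Longrightarrow> (\<And>n. n < N \<Longrightarrow> h n = 0) \<Longrightarrow> h \<in> W"
    using openin_TT_point[OF W(1)] by metis
  define e where "e = (\<lambda>n. if n = N then 1 else (0::real))"
  have eC: "e \<in> C" by (auto simp: e_def C_iff)
  have "{n. e n \<noteq> 0} = {N}" by (auto simp: e_def)
  then have eH: "e \<in> HH" using eC by (simp add: HH_def)
  have "e \<in> W" using N[OF eC] by (simp add: e_def)
  then have "e \<in> gm ` {x \<in> HH. x 0 = 0}" using W eH by blast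
  then obtain x where "x \<in> HH" "x 0 = 0" "gm x = e" by auto
  then show False using not_in_image[of x N] by (simp add: e_def)
qed

theorem mainTheorem16:
  shows "\<exists>(K :: (nat \<Rightarrow> real) monoid) T.
           topological_group K T \<and> comm_group K \<and> compact_space T \<and> metrizable_space T \<and>
           (\<exists>H. subgroup H K \<and> countable H \<and> T closure_of H = topspace T \<and>
                \<not> g_reversible (K\<lparr>carrier := H\<rparr>) (subtopology T H))"
proof (intro exI conjI)
  show "topological_group Kg TT" by (rule topgrp)
  show "comm_group Kg" by (rule group_Kg)
  show "compact_space TT" by (rule compact_TT)
  show "metrizable_space TT" by (rule metr_TT)
  show "subgroup HH Kg" by (rule HH_sub)
  show "countable HH" by (rule HH_count)
  show "TT closure_of HH = topspace TT" by (rule HH_dense)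
  show "\<not> g_reversible (Kg\<lparr>carrier := HH\<rparr>) (subtopology TT HH)"
    unfolding g_reversible_def using gm_iso gm_cont_HH not_open by (auto simp: GG_def)
qed

end
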